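(* With $I_z$ as in the context, $I_z$ is stable under right multiplication by $\frac{1+v}{2}$, so it is a right $\mathcal O_L$-module via $\frac{1+\sqrt{-N}}{2}\mapsto$ right multiplication by $\frac{1+v}{2}$; and as a right $\mathcal O_L$-module, $I_z\cong J\oplus J$, where $J=a\mathbb Z+\frac{b-\sqrt{-N}}{2}\mathbb Z\subset\mathcal O_L$ (an ideal of $\mathcal O_L$ in the class determined by $Q$).
   Context: Let $D<-4$ be the discriminant of an imaginary quadratic field $K=\mathbb Q(\sqrt D)$ with $|D|$ prime. Let $N$ be a prime, split in the ring of integers of $K$, such that $-N$ is the discriminant of $L=\mathbb Q(\sqrt{-N})$ with ring of integers $\mathcal O_L$. Fix a prime ideal $\mathcal N$ of $\mathcal O_K$ of norm $N$, conjugate $\bar{\mathcal N}$; for a primitive integral ideal $\mathfrak a$ of $\mathcal O_K$ of norm prime to $N$, write $\mathfrak a\bar{\mathcal N}=a_1N\mathbb Z+\frac{-b_1+\sqrt D}{2}\mathbb Z$ with $a_1,b_1\in\mathbb Z$. Let $Q=[a,b,c]$ be a primitive positive definite form with $b^2-4ac=-N$. Let $B'=(D,-N)_{\mathbb Q}$ with basis $1,u,v,uv$, $u^2=D$, $v^2=-N$, $uv=-vu$. Define $I_z=\mathbb Zx_1+\mathbb Zx_2+\mathbb Zy_1+\mathbb Zy_2$ with $x_1=\frac{b_1-u}{2a_1N}\,av$, $x_2=\frac{b_1-u}{2a_1N}\cdot\frac{N+bv}{2}$, $y_1=\frac{b-v}{2}$, $y_2=-a$. *)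

theory Defs
  imports Main "HOL-Computational_Algebra.Computational_Algebra"
begin

definition fund_disc :: "int \<Rightarrow> bool" where
  "fund_disc d \<longleftrightarrow> (d mod 4 = 1 \<and> squarefree d) \<or>
     ((d mod 16 = 8 \<or> d mod 16 = 12) \<and> squarefree (d div 4))"

section \<open>The imaginary quadratic field K = Q(sqrt D), elements x + y sqrt D as pairs\<close>

type_synonym kelt = "rat \<times> rat"

definition kmul :: "int \<Rightarrow> kelt \<Rightarrow> kelt \<Rightarrow> kelt" where
  "kmul D p q = (fst p * fst q + of_int D * snd p * snd q, fst p * snd q + snd p * fst q)"

definition kadd :: "kelt \<Rightarrow> kelt \<Rightarrow> kelt" where
  "kadd p q = (fst p + fst q, snd p + snd q)"

definition kneg :: "kelt \<Rightarrow> kelt" where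
  "kneg p = (- fst p, - snd p)"

definition ksub :: "kelt \<Rightarrow> kelt \<Rightarrow> kelt" where
  "ksub p q = (fst p - fst q, snd p - snd q)"

text \<open>Ring of integers of K for a fundamental discriminant D: Z + Z (D + sqrt D)/2.\<close>
definition OK :: "int \<Rightarrow> kelt set" where
  "OK D = {(of_int m + of_int n * of_int D / 2, of_int n / 2) | m n :: int. True}"

definition zspan2 :: "kelt \<Rightarrow> kelt \<Rightarrow> kelt set" where
  "zspan2 p q = {(of_int m * fst p + of_int n * fst q, of_int m * snd p + of_int n * snd q)
                 | m n :: int. True}"

definition kis_ideal :: "int \<Rightarrow> kelt set \<Rightarrow> bool" where
  "kis_ideal D I \<longleftrightarrow> I \<subseteq> OK D \<and> (0, 0) \<in> I \<and>
     (\<forall>x\<in>I. \<forall>y\<in>I. kadd x y \<in> I) \<and> (\<forall>x\<in>I. kneg x \<in> I) \<and>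
     (\<forall>r\<in>OK D. \<forall>x\<in>I. kmul D r x \<in> I)"

definition kis_prime_ideal :: "int \<Rightarrow> kelt set \<Rightarrow> bool" where
  "kis_prime_ideal D P \<longleftrightarrow> kis_ideal D P \<and> P \<noteq> OK D \<and> P \<noteq> {(0,0)} \<and>
     (\<forall>x\<in>OK D. \<forall>y\<in>OK D. kmul D x y \<in> P \<longrightarrow> x \<in> P \<or> y \<in> P)"

text \<open>Absolute norm = index [O_K : I] (number of cosets).\<close>
definition kideal_norm :: "int \<Rightarrow> kelt set \<Rightarrow> nat" where
  "kideal_norm D I = card ((\<lambda>x. {y \<in> OK D. ksub x y \<in> I}) ` OK D)"

definition kprimitive_ideal :: "int \<Rightarrow> kelt set \<Rightarrow> bool" where
  "kprimitive_ideal D I \<longleftrightarrow>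
     \<not> (\<exists>n::int. n > 1 \<and> I \<subseteq> {(of_int n * fst z, of_int n * snd z) | z. z \<in> OK D})"

definition conj_set :: "kelt set \<Rightarrow> kelt set" where
  "conj_set I = (\<lambda>p. (fst p, - snd p)) ` I"

definition kideal_prod :: "int \<Rightarrow> kelt set \<Rightarrow> kelt set \<Rightarrow> kelt set" where
  "kideal_prod D A B = {((\<Sum>i<k. fst (kmul D (f i) (g i))), (\<Sum>i<k. snd (kmul D (f i) (g i))))
      | (k::nat) f g. \<forall>i<k. f i \<in> A \<and> g i \<in> B}"

definition splits_in :: "int \<Rightarrow> int \<Rightarrow> bool" where
  "splits_in D N \<longleftrightarrow> (\<exists>P. kis_prime_ideal D P \<and> int (kideal_norm D P) = N \<and> P \<noteq> conj_set P)"

type_synonym quat = "rat \<times> rat \<times> rat \<times> rat"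

text \<open>Coordinates (a0,a1,a2,a3) stand for a0 + a1 u + a2 v + a3 uv, with
  u^2 = alpha, v^2 = beta, uv = - vu.\<close>
definition qmul :: "rat \<Rightarrow> rat \<Rightarrow> quat \<Rightarrow> quat \<Rightarrow> quat" where
  "qmul al be x y = (case x of (a0,a1,a2,a3) \<Rightarrow> case y of (b0,b1,b2,b3) \<Rightarrow>
     (a0*b0 + al*a1*b1 + be*a2*b2 - al*be*a3*b3,
      a0*b1 + a1*b0 - be*a2*b3 + be*a3*b2,
      a0*b2 + a2*b0 + al*a1*b3 - al*a3*b1,
      a0*b3 + a3*b0 + a1*b2 - a2*b1))"

definition qadd :: "quat \<Rightarrow> quat \<Rightarrow> quat" where
  "qadd x y = (case x of (a0,a1,a2,a3) \<Rightarrow> case y of (b0,b1,b2,b3) \<Rightarrow>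
     (a0+b0, a1+b1, a2+b2, a3+b3))"

definition qsc :: "int \<Rightarrow> quat \<Rightarrow> quat" where
  "qsc m x = (case x of (a0,a1,a2,a3) \<Rightarrow>
     (of_int m * a0, of_int m * a1, of_int m * a2, of_int m * a3))"

definition qu :: quat where "qu = (0,1,0,0)"
definition qv :: quat where "qv = (0,0,1,0)"
definition qrat :: "rat \<Rightarrow> quat" where "qrat r = (r,0,0,0)"

definition Iz :: "int \<Rightarrow> int \<Rightarrow> int \<Rightarrow> int \<Rightarrow> int \<Rightarrow> int \<Rightarrow> quat set" where
  "Iz D N a b a1 b1 =
    (let mul = qmul (of_int D) (- of_int N);
         t = (of_int b1 / of_int (2*a1*N), - 1 / of_int (2*a1*N), 0, 0);
         x1 = mul t (0, 0, of_int a, 0);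
         x2 = mul t (of_int N / 2, 0, of_int b / 2, 0);
         y1 = (of_int b / 2, 0, - 1 / 2, 0);
         y2 = (- of_int a, 0, 0, 0)
     in {qadd (qadd (qsc m1 x1) (qsc m2 x2)) (qadd (qsc n1 y1) (qsc n2 y2)) | m1 m2 n1 n2. True})"

definition qomega :: quat where "qomega = (1/2, 0, 1/2, 0)"

section \<open>The field L = Q(sqrt(-N)): p + q sqrt(-N) as pairs\<close>

type_synonym lelt = "rat \<times> rat"

definition lmul :: "int \<Rightarrow> lelt \<Rightarrow> lelt \<Rightarrow> lelt" where
  "lmul N p q = (fst p * fst q - of_int N * snd p * snd q, fst p * snd q + snd p * fst q)"

definition ladd :: "lelt \<Rightarrow> lelt \<Rightarrow> lelt" where
  "ladd p q = (fst p + fst q, snd p + snd q)"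

text \<open>omega_L = (1 + sqrt(-N))/2, generating O_L = Z[omega_L] since -N = 1 mod 4.\<close>
definition lomega :: lelt where "lomega = (1/2, 1/2)"

definition Jideal :: "int \<Rightarrow> int \<Rightarrow> lelt set" where
  "Jideal a b = {(of_int m * of_int a + of_int n * of_int b / 2, - of_int n / 2) | m n :: int. True}"

end

theory Submission
  imports Defs
begin


definition phi :: "int \<Rightarrow> int \<Rightarrow> int \<Rightarrow> quat \<Rightarrow> lelt \<times> lelt" where
  "phi N a1 b1 x = (case x of (x0,x1,x2,x3) \<Rightarrow>
     ((- 2 * of_int a1 * of_int N * x3, 2 * of_int a1 * x1), (x0 + of_int b1 * x1, x2 + of_int b1 * x3)))"

lemma phi_add: "phi N a1 b1 (qadd x y) = (ladd (fst (phi N a1 b1 x)) (fst (phi N a1 b1 y)),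
     ladd (snd (phi N a1 b1 x)) (snd (phi N a1 b1 y)))"
  by (cases x; cases y) (simp add: phi_def qadd_def ladd_def algebra_simps)

lemma phi_mul: "phi N a1 b1 (qmul (of_int D) (- of_int N) x qomega) =
   (lmul N (fst (phi N a1 b1 x)) lomega, lmul N (snd (phi N a1 b1 x)) lomega)"
  by (cases x) (simp add: phi_def qmul_def qomega_def lmul_def lomega_def field_simps)

lemma phi_inj: assumes "a1 * N \<noteq> 0" shows "inj (phi N a1 b1)"
proof (rule injI)
  fix x y assume h: "phi N a1 b1 x = phi N a1 b1 y"
  obtain x0 x1 x2 x3 where x: "x = (x0,x1,x2,x3)" by (cases x) auto
  obtain y0 y1 y2 y3 where y: "y = (y0,y1,y2,y3)" by (cases y) auto
  have a: "of_int a1 \<noteq> (0::rat)" "of_int N \<noteq> (0::rat)" using assms by auto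
  from h have "x3 = y3" "x1 = y1" using a by (auto simp: phi_def x y)
  with h show "x = y" by (auto simp: phi_def x y)
qed

definition E :: "int \<Rightarrow> int \<Rightarrow> int \<Rightarrow> int \<Rightarrow> int \<Rightarrow> int \<Rightarrow> int \<Rightarrow> int \<Rightarrow> int \<Rightarrow> quat" where
  "E N a b a1 b1 m1 m2 n1 n2 = (let s = of_int b1 / of_int (2*a1*N); r = - 1 / of_int (2*a1*N) in
     (of_int m2 * s * of_int N / 2 + of_int n1 * of_int b / 2 - of_int n2 * of_int a,
      of_int m2 * r * of_int N / 2,
      of_int m1 * s * of_int a + of_int m2 * s * of_int b / 2 - of_int n1 / 2,
      of_int m1 * r * of_int a + of_int m2 * r * of_int b / 2))"

lemma Iz_eq: "Iz D N a b a1 b1 = {E N a b a1 b1 m1 m2 n1 n2 | m1 m2 n1 n2. True}"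
  unfolding Iz_def E_def Let_def
  by (simp add: qmul_def qadd_def qsc_def algebra_simps)

lemma phi_E: assumes "a1 * N \<noteq> 0"
  shows "phi N a1 b1 (E N a b a1 b1 m1 m2 n1 n2) =
    ((of_int m1 * of_int a + of_int m2 * of_int b / 2, - of_int m2 / 2),
     (of_int (- n2) * of_int a + of_int n1 * of_int b / 2, - of_int n1 / 2))"
  using assms by (simp add: phi_def E_def Let_def field_simps)



lemma J_omega:
  assumes "b = 2*k+1" "b^2 - 4*a*c = - N" "p \<in> Jideal a b"
  shows "lmul N p lomega \<in> Jideal a b"
proof -
  obtain m n where p: "p = (of_int m * of_int a + of_int n * of_int b / 2, - of_int n / 2)"
    using assms(3) by (auto simp: Jideal_def)
  have Nq: "(of_int N::rat) = 4 * of_int a * of_int c - of_int b ^ 2"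
    using arg_cong[OF assms(2), of "of_int :: int \<Rightarrow> rat"] by simp
  have bq: "(of_int b::rat) = 2 * of_int k + 1" using assms(1) by simp
  show ?thesis unfolding Jideal_def
    apply (rule CollectI)
    apply (rule exI[of _ "m*(k+1) + n*c"], rule exI[of _ "- m*a - n*k"])
    by (simp add: p lmul_def lomega_def Nq bq field_simps power2_eq_square)
qed

lemma b_odd:
  assumes "prime N" "fund_disc (- N)" "b^2 - 4*a*c = - N"
  shows "odd b"
proof -
  have "(- N) mod 4 = 1"
  proof -
    have "\<not> ((- N) mod 16 = 8 \<or> (- N) mod 16 = 12)"
    proof
      assume h: "(- N) mod 16 = 8 \<or> (- N) mod 16 = 12"
      then have "4 dvd N" by (auto simp: mod_eq_0_iff_dvd) presburger+
      then obtain k where k: "N = 2 * (2*k)" by (auto simp: dvd_def)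
      have "is_unit (2::int) \<or> is_unit (2*k)"
        using assms(1) k by (metis prime_elem_imp_irreducible prime_imp_prime_elem irreducibleD)
      then show False using k h by auto
    qed
    then show ?thesis using assms(2) unfolding fund_disc_def by auto
  qed
  show ?thesis
  proof
    assume "even b"
    then obtain k where "b = 2*k" by auto
    then have "b^2 - 4*a*c = 4*(k^2 - a*c)" by (simp add: power2_eq_square algebra_simps)
    with assms(3) \<open>(- N) mod 4 = 1\<close> show False by presburger
  qed
qed



definition knorm :: "int \<Rightarrow> kelt \<Rightarrow> rat" where
  "knorm D p = fst p ^ 2 - of_int D * snd p ^ 2"

lemma knorm_mul: "knorm D (kmul D x y) = knorm D x * knorm D y"
  by (simp add: knorm_def kmul_def power2_eq_square algebra_simps)

lemma knorm_zero: assumes "D < 0" "knorm D p = 0" shows "p = (0,0)"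
proof -
  obtain p1 p2 where p: "p = (p1,p2)" by (cases p)
  have d: "(- of_int D :: rat) > 0" using assms by simp
  have e: "p1 ^ 2 + (- of_int D) * p2 ^ 2 = 0" using assms(2) by (simp add: knorm_def p)
  have "p1 ^ 2 \<ge> 0" by simp
  moreover have "(- of_int D) * p2 ^ 2 \<ge> 0" using d by (intro mult_nonneg_nonneg) auto
  ultimately have "p1 ^ 2 = 0" "(- of_int D) * p2 ^ 2 = 0" using e by linarith+
  then have "p1 = 0" "p2 = 0" using d by auto
  then show ?thesis using p by simp
qed
lemma kmul_zero: assumes "D < 0" "kmul D x y = (0,0)" shows "x = (0,0) \<or> y = (0,0)"
proof -
  have "knorm D (kmul D x y) = 0" unfolding assms(2) knorm_def by simp
  then have "knorm D x * knorm D y = 0" by (simp only: knorm_mul)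
  then have "knorm D x = 0 \<or> knorm D y = 0" by simp
  then show ?thesis using knorm_zero[OF assms(1), of x] knorm_zero[OF assms(1), of y] by blast
qed
lemma prod_one: assumes "x \<in> A" "y \<in> B" shows "kmul D x y \<in> kideal_prod D A B"
  unfolding kideal_prod_def mem_Collect_eq
  apply (rule exI[where x=1], rule exI[where x="\<lambda>_. x"], rule exI[where x="\<lambda>_. y"])
  using assms by simp

lemma a1N_nz:
  assumes D: "D < 0" and A: "kis_ideal D A" "A \<noteq> {(0,0)}" and Nc: "kis_prime_ideal D Nc"
    and P: "kideal_prod D A (conj_set Nc) = zspan2 (of_int M, 0) w"
  shows "M \<noteq> 0"
proof
  assume M: "M = 0"
  obtain x where x: "x \<in> A" "x \<noteq> (0,0)" using A unfolding kis_ideal_def by blast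
  obtain y where y: "y \<in> Nc" "y \<noteq> (0,0)" using Nc unfolding kis_prime_ideal_def kis_ideal_def by blast
  define y' where "y' = (fst y, - snd y)"
  have y'1: "y' \<in> conj_set Nc" using y by (auto simp: y'_def conj_set_def)
  have y'2: "y' \<noteq> (0,0)" using y by (cases y) (auto simp: y'_def)
  define r :: kelt where "r = (of_int D / 2, 1/2)"
  have r: "r \<in> OK D" unfolding OK_def r_def by (rule CollectI, rule exI[of _ 0], rule exI[of _ 1]) simp
  have rx: "kmul D r x \<in> A" using A r x unfolding kis_ideal_def by blast
  define z where "z = kmul D x y'"
  have z0: "z \<noteq> (0,0)" using kmul_zero[OF D, of x y'] x y'2 unfolding z_def by blast
  have "z \<in> zspan2 (of_int M, 0) w" using prod_one[OF x(1) y'1, of D] P unfolding z_def by simp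
  then obtain n1 where n1: "z = (of_int n1 * fst w, of_int n1 * snd w)" using M by (auto simp: zspan2_def)
  have "kmul D (kmul D r x) y' \<in> zspan2 (of_int M, 0) w" using prod_one[OF rx y'1, of D] P by simp
  then obtain n2 where n2: "kmul D (kmul D r x) y' = (of_int n2 * fst w, of_int n2 * snd w)"
    using M by (auto simp: zspan2_def)
  have assoc: "kmul D (kmul D r x) y' = kmul D r z"
    unfolding z_def kmul_def by (simp add: algebra_simps)
  have e1: "kmul D r z = (of_int n2 * fst w, of_int n2 * snd w)" using n2 assoc by simp
  obtain w1 w2 where w: "w = (w1,w2)" by (cases w)
  have "kmul D (of_int n1 * of_int D / 2 - of_int n2, of_int n1 / 2) z = (0,0)"
  proof -
    have h: "w1 * (of_int D * of_int n1) / 2 + w2 * (of_int D * of_int n1) / 2 = w1 * of_int n2"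
         "w1 * of_int n1 / 2 + w2 * (of_int D * of_int n1) / 2 = w2 * of_int n2"
      using e1 n1 unfolding w kmul_def r_def by (simp_all add: algebra_simps)
    have h1: "of_int n1 * (w1 * (of_int D * of_int n1) / 2 + w2 * (of_int D * of_int n1) / 2) = of_int n1 * (w1 * of_int n2)"
      using h(1) by simp
    have h2: "of_int n1 * (w1 * of_int n1 / 2 + w2 * (of_int D * of_int n1) / 2) = of_int n1 * (w2 * of_int n2)"
      using h(2) by simp
    show ?thesis using h1 h2 n1 unfolding w kmul_def by (simp add: algebra_simps)
  qed
  then have "(of_int n1 * of_int D / 2 - of_int n2, of_int n1 / 2) = ((0,0)::kelt)"
    using kmul_zero[OF D] z0 by blast
  then have "n1 = 0" by simp
  then show False using n1 z0 by simp
qed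
theorem mainTheorem15:
  fixes D N a b c a1 b1 :: int and A Nc :: "kelt set"
  assumes D_disc: "fund_disc D" and D_lt: "D < -4" and D_prime: "prime (- D)"
    and N_prime: "prime N" and N_split: "splits_in D N" and N_disc: "fund_disc (- N)"
    and Nc_prime: "kis_prime_ideal D Nc" and Nc_norm: "int (kideal_norm D Nc) = N"
    and A_ideal: "kis_ideal D A" and A_nonzero: "A \<noteq> {(0, 0)}" and A_prim: "kprimitive_ideal D A"
    and A_coprime: "coprime (int (kideal_norm D A)) N"
    and A_basis: "kideal_prod D A (conj_set Nc) = zspan2 (of_int (a1 * N), 0) (- of_int b1 / 2, 1 / 2)"
    and Q_disc: "b^2 - 4 * a * c = - N" and Q_pos: "a > 0" and Q_prim: "gcd a (gcd b c) = 1"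
  shows "(\<forall>x\<in>Iz D N a b a1 b1. qmul (of_int D) (- of_int N) x qomega \<in> Iz D N a b a1 b1)
       \<and> (\<exists>\<phi> :: quat \<Rightarrow> lelt \<times> lelt.
            bij_betw \<phi> (Iz D N a b a1 b1) (Jideal a b \<times> Jideal a b)
          \<and> (\<forall>x\<in>Iz D N a b a1 b1. \<forall>y\<in>Iz D N a b a1 b1.
               \<phi> (qadd x y) = (ladd (fst (\<phi> x)) (fst (\<phi> y)), ladd (snd (\<phi> x)) (snd (\<phi> y))))
          \<and> (\<forall>x\<in>Iz D N a b a1 b1.
               \<phi> (qmul (of_int D) (- of_int N) x qomega)
                 = (lmul N (fst (\<phi> x)) lomega, lmul N (snd (\<phi> x)) lomega)))"
  proof -
  have T: "a1 * N \<noteq> 0"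
    using a1N_nz[OF _ A_ideal A_nonzero Nc_prime A_basis] D_lt by simp
  have "odd b" using b_odd[OF N_prime N_disc Q_disc] .
  then obtain k where k: "b = 2*k+1" by (metis oddE)
  let ?I = "Iz D N a b a1 b1" and ?J = "Jideal a b" and ?f = "phi N a1 b1"
  have img: "?f x \<in> ?J \<times> ?J" if "x \<in> ?I" for x
  proof -
    from \<open>x \<in> ?I\<close> obtain m1 m2 n1 n2 where x: "x = E N a b a1 b1 m1 m2 n1 n2" by (auto simp: Iz_eq)
    have "((of_int m1 * of_int a + of_int m2 * of_int b / 2, - of_int m2 / 2)::lelt) \<in> ?J"
      unfolding Jideal_def by blast
    moreover have "((of_int (- n2) * of_int a + of_int n1 * of_int b / 2, - of_int n1 / 2)::lelt) \<in> ?J"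
      unfolding Jideal_def by blast
    ultimately show ?thesis unfolding x phi_E[OF T] by simp
  qed
  have srj: "\<exists>x\<in>?I. ?f x = (p, q)" if pq: "p \<in> ?J" "q \<in> ?J" for p q
  proof -
    obtain m n where p: "p = (of_int m * of_int a + of_int n * of_int b / 2, - of_int n / 2)"
      using pq(1) by (auto simp: Jideal_def)
    obtain m' n' where q: "q = (of_int m' * of_int a + of_int n' * of_int b / 2, - of_int n' / 2)"
      using pq(2) by (auto simp: Jideal_def)
    have "E N a b a1 b1 m n n' (- m') \<in> ?I" by (auto simp: Iz_eq)
    moreover have "?f (E N a b a1 b1 m n n' (- m')) = (p, q)" unfolding phi_E[OF T] p q by simp
    ultimately show ?thesis by blast
  qed
  have inj: "inj ?f" using phi_inj[OF T] .
  have stab: "\<forall>x\<in>?I. qmul (of_int D) (- of_int N) x qomega \<in> ?I"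
  proof
    fix x assume x: "x \<in> ?I"
    have "?f x \<in> ?J \<times> ?J" using img[OF x] .
    then have "lmul N (fst (?f x)) lomega \<in> ?J" "lmul N (snd (?f x)) lomega \<in> ?J"
      using J_omega[OF k Q_disc] by auto
    then obtain y where y: "y \<in> ?I" "?f y = ?f (qmul (of_int D) (- of_int N) x qomega)"
      using srj unfolding phi_mul by metis
    then have "y = qmul (of_int D) (- of_int N) x qomega" using inj by (simp add: inj_eq)
    then show "qmul (of_int D) (- of_int N) x qomega \<in> ?I" using y by simp
  qed
  have "bij_betw ?f ?I (?J \<times> ?J)"
    unfolding bij_betw_def
  proof
    show "inj_on ?f ?I" using inj by (meson inj_on_subset subset_UNIV)
    show "?f ` ?I = ?J \<times> ?J"
    proof
      show "?f ` ?I \<subseteq> ?J \<times> ?J" using img by blast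
      show "?J \<times> ?J \<subseteq> ?f ` ?I"
      proof
        fix pq assume "pq \<in> ?J \<times> ?J"
        then obtain p q where "pq = (p,q)" "p \<in> ?J" "q \<in> ?J" by blast
        then show "pq \<in> ?f ` ?I" using srj[of p q] by (metis imageI)
      qed
    qed
  qed
  moreover have "\<forall>x\<in>?I. \<forall>y\<in>?I. ?f (qadd x y) = (ladd (fst (?f x)) (fst (?f y)), ladd (snd (?f x)) (snd (?f y)))"
    by (intro ballI phi_add)
  moreover have "\<forall>x\<in>?I. ?f (qmul (of_int D) (- of_int N) x qomega) = (lmul N (fst (?f x)) lomega, lmul N (snd (?f x)) lomega)"
    by (intro ballI phi_mul)
  ultimately show ?thesis using stab by (intro conjI exI[where x="?f"]) auto
qed

end
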